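(* In the $(3,2,2)$ scenario, every causal correlation satisfies $p_{\rm gynin}\le\tfrac12$.
   Context: $(3,2,2)$ scenario: three parties, $a_k,x_k\in\{0,1\}$, $\bar a=1\oplus a$. $p_{\rm gynin}=\frac18\sum_{\vec a\in\{0,1\}^3}\big[p((a_3,a_1,a_2)|\vec a)+p((\bar a_3,\bar a_1,\bar a_2)|\vec a)\big]$, where $p((y_1,y_2,y_3)|\vec a)$ is the probability of outcomes $x_k=y_k$. Causal correlations (recursive): a one-party correlation is causal; an $N$-party correlation is causal iff $p(\vec x|\vec a)=\sum_{k=1}^N q_k\,p_k(x_k|a_k)\,p^{a_k}_{k,x_k}(\vec x_{\backslash k}|\vec a_{\backslash k})$ with $q_k\ge0$, $\sum_kq_k=1$, $p_k(\cdot|a_k)$ probability distributions, and each $p^{a_k}_{k,x_k}$ a causal $(N-1)$-party correlation. *)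

theory Defs
  imports Complex_Main
begin

text \<open>Parties are labelled by natural numbers (parties 1,2,3 of the paper are 0,1,2 here).
  Inputs a and outputs x are bit vectors, represented as functions nat \<Rightarrow> bool.
  A correlation on a party set S is a function p x a (probability of outputs x given inputs a)
  which only depends on the coordinates in S.\<close>

definition local_on :: "nat set \<Rightarrow> ((nat \<Rightarrow> bool) \<Rightarrow> (nat \<Rightarrow> bool) \<Rightarrow> real) \<Rightarrow> bool" where
  "local_on S p \<longleftrightarrow> (\<forall>x a x' a'. (\<forall>i\<in>S. x i = x' i \<and> a i = a' i) \<longrightarrow> p x a = p x' a')"

inductive causal :: "nat set \<Rightarrow> ((nat \<Rightarrow> bool) \<Rightarrow> (nat \<Rightarrow> bool) \<Rightarrow> real) \<Rightarrow> bool" where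
  one: "\<lbrakk> local_on {k} p; \<forall>x a. p x a \<ge> 0;
          \<forall>x a. p (x(k := True)) a + p (x(k := False)) a = 1 \<rbrakk> \<Longrightarrow> causal {k} p"
| step: "\<lbrakk> finite S; card S \<ge> 2;
           \<forall>k\<in>S. q k \<ge> 0; (\<Sum>k\<in>S. q k) = 1;
           \<forall>k\<in>S. \<forall>y b. P k y b \<ge> 0;
           \<forall>k\<in>S. \<forall>b. P k True b + P k False b = 1;
           \<forall>k\<in>S. \<forall>y b. causal (S - {k}) (R k y b);
           \<forall>x a. p x a = (\<Sum>k\<in>S. q k * P k (x k) (a k) * R k (x k) (a k) x a) \<rbrakk>
        \<Longrightarrow> causal S p"

definition vec3 :: "bool \<Rightarrow> bool \<Rightarrow> bool \<Rightarrow> nat \<Rightarrow> bool" where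
  "vec3 b0 b1 b2 = (\<lambda>i. if i = 0 then b0 else if i = 1 then b1 else b2)"

definition p_gynin :: "((nat \<Rightarrow> bool) \<Rightarrow> (nat \<Rightarrow> bool) \<Rightarrow> real) \<Rightarrow> real" where
  "p_gynin p = (1/8) * (\<Sum>a0\<in>UNIV. \<Sum>a1\<in>UNIV. \<Sum>a2\<in>UNIV.
       p (vec3 a2 a0 a1) (vec3 a0 a1 a2) + p (vec3 (\<not> a2) (\<not> a0) (\<not> a1)) (vec3 a0 a1 a2))"

end

theory Submission
  imports Defs
begin

lemma causal_bounds: "causal S p \<Longrightarrow> 0 \<le> p x a \<and> p x a \<le> 1"
proof (induction arbitrary: x a rule: causal.induct)
  case (one k p)
  have e: "p (x(k := x k)) a = p x a" by simp
  have "p (x(k := True)) a + p (x(k := False)) a = 1" using one by blast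
  moreover have "0 \<le> p (x(k := True)) a" "0 \<le> p (x(k := False)) a" using one by auto
  ultimately have "p (x(k := x k)) a \<le> 1" by (cases "x k") auto
  then show ?case using e one by auto
next
  case (step S q P R p)
  have Pb: "P k y b \<le> 1" if "k \<in> S" for k y b
  proof -
    have "P k True b + P k False b = 1" "0 \<le> P k True b" "0 \<le> P k False b"
      using step that by auto
    then show ?thesis by (cases y) auto
  qed
  have t: "0 \<le> q k * P k (x k) (a k) * R k (x k) (a k) x a \<and>
           q k * P k (x k) (a k) * R k (x k) (a k) x a \<le> q k" if k: "k \<in> S" for k
  proof -
    have r: "0 \<le> R k (x k) (a k) x a" "R k (x k) (a k) x a \<le> 1" using step.IH k by auto
    have qp: "0 \<le> q k * P k (x k) (a k)" using step k by auto
    have "q k * P k (x k) (a k) * R k (x k) (a k) x a \<le> q k * P k (x k) (a k)"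
      using mult_left_le[OF r(2) qp] .
    also have "\<dots> \<le> q k" using mult_left_le[OF Pb[OF k] ] step k by auto
    finally show ?thesis using qp r by auto
  qed
  have "0 \<le> (\<Sum>k\<in>S. q k * P k (x k) (a k) * R k (x k) (a k) x a)"
    using t by (intro sum_nonneg) auto
  moreover have "(\<Sum>k\<in>S. q k * P k (x k) (a k) * R k (x k) (a k) x a) \<le> (\<Sum>k\<in>S. q k)"
    using t by (intro sum_mono) auto
  ultimately show ?case using step by auto
qed

lemma two_bound:
  assumes "causal {j,l} R" "j \<noteq> l"
    and h1: "\<forall>s. Xa s j = c \<and> Aa s j = s \<and> Xa s l = s \<and> Aa s l = y"
    and h2: "\<forall>s. Xb s j = (\<not>c) \<and> Ab s j = s \<and> Xb s l = (\<not>s) \<and> Ab s l = (\<not>y)"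
  shows "R (Xa True) (Aa True) + R (Xa False) (Aa False)
       + R (Xb True) (Ab True) + R (Xb False) (Ab False) \<le> 2"
  using assms(1)
proof cases
  case (one k)
  then have "j \<in> {k}" "l \<in> {k}" by blast+
  then show ?thesis using assms(2) by simp
next
  case (step q P R')
  have Pb: "P m y b \<le> 1" "0 \<le> P m y b" if "m \<in> {j,l}" for m y b
  proof -
    have "P m True b + P m False b = 1" "0 \<le> P m True b" "0 \<le> P m False b"
      using step that by auto
    then show "P m y b \<le> 1" "0 \<le> P m y b" by (cases y, auto)+
  qed
  have Pc: "P m c b + P m (\<not>c) b = 1" if "m \<in> {j,l}" for m b c
  proof -
    have "P m True b + P m False b = 1" using step that by blast
    then show ?thesis by (cases c) (simp_all add: add.commute)
  qed
  have Rb: "R' m y b x a \<le> 1" if "m \<in> {j,l}" for m y b x a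
  proof -
    have "causal ({j,l} - {m}) (R' m y b)" using step that by blast
    then show ?thesis using causal_bounds by blast
  qed
  define f where "f m x a = q m * P m (x m) (a m) * R' m (x m) (a m) x a" for m x a
  have fle: "f m x a \<le> q m * P m (x m) (a m)" if "m \<in> {j,l}" for m x a
    unfolding f_def
    by (rule mult_left_le[OF Rb[OF that]]) (use step that Pb[OF that] in auto)
  have Rs: "R x a = f j x a + f l x a" for x a
    using step assms(2) unfolding f_def by auto
  have qj: "0 \<le> q j" "0 \<le> q l" "q j + q l = 1" using step assms(2) by auto
  have jpart: "f j (Xa s) (Aa s) + f j (Xb s) (Ab s) \<le> q j" for s
  proof -
    have "f j (Xa s) (Aa s) + f j (Xb s) (Ab s) \<le> q j * P j c s + q j * P j (\<not>c) s"
      using fle[of j "Xa s" "Aa s"] fle[of j "Xb s" "Ab s"] h1 h2 by auto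
    also have "\<dots> = q j" using Pc(1)[of j c s] by (simp add: distrib_left[symmetric])
    finally show ?thesis .
  qed
  have lpart: "f l (Xa s) (Aa s) + f l (Xb s) (Ab s) \<le> q l * P l s y + q l * P l (\<not>s) (\<not>y)" for s
    using fle[of l "Xa s" "Aa s"] fle[of l "Xb s" "Ab s"] h1 h2 by auto
  have "q l * P l True y + q l * P l (\<not>True) (\<not>y) + (q l * P l False y + q l * P l (\<not>False) (\<not>y))
        = q l * (P l True y + P l False y) + q l * (P l True (\<not>y) + P l False (\<not>y))"
    by (simp add: algebra_simps)
  also have "\<dots> = 2 * q l" using Pc(1)[of l True y] Pc(1)[of l True "\<not>y"] by simp
  finally have ll: "q l * P l True y + q l * P l (\<not>True) (\<not>y) + (q l * P l False y + q l * P l (\<not>False) (\<not>y)) = 2 * q l" .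
  show ?thesis unfolding Rs
    using jpart[of True] jpart[of False] lpart[of True] lpart[of False] ll qj by linarith
qed


lemma vec3_simps[simp]: "vec3 b0 b1 b2 0 = b0" "vec3 b0 b1 b2 (Suc 0) = b1" "vec3 b0 b1 b2 2 = b2" "vec3 b0 b1 b2 1 = b1"
  by (simp_all add: vec3_def)

definition gsum :: "((nat \<Rightarrow> bool) \<Rightarrow> (nat \<Rightarrow> bool) \<Rightarrow> real) \<Rightarrow> real" where
  "gsum f = (\<Sum>a0\<in>UNIV. \<Sum>a1\<in>UNIV. \<Sum>a2\<in>UNIV.
       f (vec3 a2 a0 a1) (vec3 a0 a1 a2) + f (vec3 (\<not> a2) (\<not> a0) (\<not> a1)) (vec3 a0 a1 a2))"

lemma gsum_expand: "gsum f =
   f (vec3 True True True) (vec3 True True True) + f (vec3 False False False) (vec3 True True True)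
 + f (vec3 False True True) (vec3 True True False) + f (vec3 True False False) (vec3 True True False)
 + f (vec3 True True False) (vec3 True False True) + f (vec3 False False True) (vec3 True False True)
 + f (vec3 False True False) (vec3 True False False) + f (vec3 True False True) (vec3 True False False)
 + f (vec3 True False True) (vec3 False True True) + f (vec3 False True False) (vec3 False True True)
 + f (vec3 False False True) (vec3 False True False) + f (vec3 True True False) (vec3 False True False)
 + f (vec3 True False False) (vec3 False False True) + f (vec3 False True True) (vec3 False False True)
 + f (vec3 False False False) (vec3 False False False) + f (vec3 True True True) (vec3 False False False)"
  unfolding gsum_def by (simp add: UNIV_bool algebra_simps)

lemma gsum_lin: "gsum (\<lambda>x a. u * f x a + v * g x a + w * h x a) = u * gsum f + v * gsum g + w * gsum h"
  unfolding gsum_expand by (simp add: algebra_simps)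

lemma first_party_0:
  assumes P: "\<forall>y b. P y b \<ge> 0" "\<forall>b. P True b + P False b = 1"
    and R: "\<forall>y b. causal {1,2} (R y b)"
  shows "gsum (\<lambda>x a. P (x 0) (a 0) * R (x 0) (a 0) x a) \<le> 4"
proof -
  have inst: "P y b * (R y b (vec3 y b True) (vec3 b True y) + R y b (vec3 y b False) (vec3 b False y)
      + R y b (vec3 y (\<not>b) (\<not>True)) (vec3 b True (\<not>y)) + R y b (vec3 y (\<not>b) (\<not>False)) (vec3 b False (\<not>y)))
      \<le> P y b * 2" for y b
  proof (rule mult_left_mono)
    show "0 \<le> P y b" using P by auto
    show "R y b (vec3 y b True) (vec3 b True y) + R y b (vec3 y b False) (vec3 b False y)
      + R y b (vec3 y (\<not>b) (\<not>True)) (vec3 b True (\<not>y)) + R y b (vec3 y (\<not>b) (\<not>False)) (vec3 b False (\<not>y)) \<le> 2"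
      using two_bound[where R="R y b" and j=1 and l=2 and Xa="\<lambda>s. vec3 y b s" and Aa="\<lambda>s. vec3 b s y"
          and c=b and y=y and Xb="\<lambda>s. vec3 y (\<not>b) (\<not>s)" and Ab="\<lambda>s. vec3 b s (\<not>y)"] R
      by (simp add: vec3_def)
  qed
  have s: "P True b + P False b = 1" for b using P by auto
  show ?thesis unfolding gsum_expand
    using inst[of True True] inst[of True False] inst[of False True] inst[of False False] s[of True] s[of False]
    by (simp add: algebra_simps)
qed

lemma first_party_1:
  assumes P: "\<forall>y b. P y b \<ge> 0" "\<forall>b. P True b + P False b = 1"
    and R: "\<forall>y b. causal {2,0} (R y b)"
  shows "gsum (\<lambda>x a. P (x 1) (a 1) * R (x 1) (a 1) x a) \<le> 4"
proof -
  have inst: "P y b * (R y b (vec3 True y b) (vec3 y b True) + R y b (vec3 False y b) (vec3 y b False)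
      + R y b (vec3 (\<not>True) y (\<not>b)) (vec3 (\<not>y) b True) + R y b (vec3 (\<not>False) y (\<not>b)) (vec3 (\<not>y) b False))
      \<le> P y b * 2" for y b
  proof (rule mult_left_mono)
    show "0 \<le> P y b" using P by auto
    show "R y b (vec3 True y b) (vec3 y b True) + R y b (vec3 False y b) (vec3 y b False)
      + R y b (vec3 (\<not>True) y (\<not>b)) (vec3 (\<not>y) b True) + R y b (vec3 (\<not>False) y (\<not>b)) (vec3 (\<not>y) b False) \<le> 2"
      using two_bound[where R="R y b" and j=2 and l=0 and Xa="\<lambda>s. vec3 s y b" and Aa="\<lambda>s. vec3 y b s"
          and c=b and y=y and Xb="\<lambda>s. vec3 (\<not>s) y (\<not>b)" and Ab="\<lambda>s. vec3 (\<not>y) b s"] R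
      by (simp add: vec3_def)
  qed
  have s: "P True b + P False b = 1" for b using P by auto
  show ?thesis unfolding gsum_expand
    using inst[of True True] inst[of True False] inst[of False True] inst[of False False] s[of True] s[of False]
    by (simp add: algebra_simps)
qed

lemma first_party_2:
  assumes P: "\<forall>y b. P y b \<ge> 0" "\<forall>b. P True b + P False b = 1"
    and R: "\<forall>y b. causal {0,1} (R y b)"
  shows "gsum (\<lambda>x a. P (x 2) (a 2) * R (x 2) (a 2) x a) \<le> 4"
proof -
  have inst: "P y b * (R y b (vec3 b True y) (vec3 True y b) + R y b (vec3 b False y) (vec3 False y b)
      + R y b (vec3 (\<not>b) (\<not>True) y) (vec3 True (\<not>y) b) + R y b (vec3 (\<not>b) (\<not>False) y) (vec3 False (\<not>y) b))
      \<le> P y b * 2" for y b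
  proof (rule mult_left_mono)
    show "0 \<le> P y b" using P by auto
    show "R y b (vec3 b True y) (vec3 True y b) + R y b (vec3 b False y) (vec3 False y b)
      + R y b (vec3 (\<not>b) (\<not>True) y) (vec3 True (\<not>y) b) + R y b (vec3 (\<not>b) (\<not>False) y) (vec3 False (\<not>y) b) \<le> 2"
      using two_bound[where R="R y b" and j=0 and l=1 and Xa="\<lambda>s. vec3 b s y" and Aa="\<lambda>s. vec3 s y b"
          and c=b and y=y and Xb="\<lambda>s. vec3 (\<not>b) (\<not>s) y" and Ab="\<lambda>s. vec3 s (\<not>y) b"] R
      by (simp add: vec3_def)
  qed
  have s: "P True b + P False b = 1" for b using P by auto
  show ?thesis unfolding gsum_expand
    using inst[of True True] inst[of True False] inst[of False True] inst[of False False] s[of True] s[of False]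
    by (simp add: algebra_simps)
qed


theorem mainTheorem10:
  fixes p :: "(nat \<Rightarrow> bool) \<Rightarrow> (nat \<Rightarrow> bool) \<Rightarrow> real"
  assumes "causal {0, 1, 2} p"
  shows "p_gynin p \<le> 1 / 2"
  using assms
proof cases
  case (one k)
  have eq: "{0,1,2::nat} = {k}" using one(1) .
  have "(0::nat) \<in> {k}" unfolding eq[symmetric] by simp
  moreover have "(1::nat) \<in> {k}" unfolding eq[symmetric] by simp
  ultimately show ?thesis by simp
next
  case (step q P R)
  define f where "f k x a = P k (x k) (a k) * R k (x k) (a k) x a" for k :: nat and x a
  have pe: "p = (\<lambda>x a. q 0 * f 0 x a + q 1 * f 1 x a + q 2 * f 2 x a)"
    using step unfolding f_def by (auto simp: fun_eq_iff algebra_simps)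
  have g: "p_gynin p = gsum p / 8" unfolding p_gynin_def gsum_def by simp
  have cc: "\<forall>y b. causal ({0,1,2} - {k}) (R k y b)" if "k \<in> {0,1,2}" for k
    using step that by blast
  have e0: "{0,1,2} - {0::nat} = {1,2}" and e1: "{0,1,2} - {1::nat} = {2,0}"
    and e2: "{0,1,2} - {2::nat} = {0,1}" by auto
  have c0: "\<forall>y b. causal {1,2} (R 0 y b)" using cc[of 0] unfolding e0 by simp
  have c1: "\<forall>y b. causal {2,0} (R 1 y b)" using cc[of 1] unfolding e1 by simp
  have c2: "\<forall>y b. causal {0,1} (R 2 y b)" using cc[of 2] unfolding e2 by simp
  have b0: "gsum (f 0) \<le> 4" unfolding f_def
    by (rule first_party_0) (use step c0 in auto)
  have b1: "gsum (f 1) \<le> 4" unfolding f_def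
    by (rule first_party_1) (use step c1 in auto)
  have b2: "gsum (f 2) \<le> 4" unfolding f_def
    by (rule first_party_2) (use step c2 in auto)
  have q: "q 0 \<ge> 0" "q 1 \<ge> 0" "q 2 \<ge> 0" "q 0 + q 1 + q 2 = 1" using step by auto
  have "gsum p = q 0 * gsum (f 0) + q 1 * gsum (f 1) + q 2 * gsum (f 2)"
    unfolding pe by (rule gsum_lin)
  also have "\<dots> \<le> q 0 * 4 + q 1 * 4 + q 2 * 4"
    using b0 b1 b2 q by (intro add_mono mult_left_mono) auto
  finally show ?thesis using g q by simp
qed

end
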